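(* Let $(M,\rho)$ be a complete metric space and let $f,g:M\to\mathbb{R}$ be Lipschitz functions such that $f$ is bounded below and $$|\widetilde\nabla f|(x)\ge|\widetilde\nabla g|(x)\qquad\text{for all } x\in M.$$ Then $$\inf_M(f-g)=\inf_{\varepsilon\operatorname{Crit} f}(f-g)\qquad\text{for every }\varepsilon>0.$$
   Context: $[t]^+:=\max\{0,t\}$. The global slope is $|\widetilde\nabla f|(x):=\sup_{y\neq x}\frac{[f(x)-f(y)]^+}{\rho(x,y)}\in[0,+\infty]$. For $\varepsilon\ge0$, $\varepsilon\operatorname{Crit} f:=\{x:\ |\widetilde\nabla f|(x)\le\varepsilon\}=\{x:\ f(y)\ge f(x)-\varepsilon\rho(y,x)\ \forall y\in M\}$. *)

theory Defs
  imports "HOL-Analysis.Analysis"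
begin

definition global_slope :: "('a::metric_space \<Rightarrow> real) \<Rightarrow> 'a \<Rightarrow> ereal" where
  "global_slope f x = Sup (insert 0 {ereal (max 0 (f x - f y) / dist x y) | y. y \<noteq> x})"

definition eps_crit :: "real \<Rightarrow> ('a::metric_space \<Rightarrow> real) \<Rightarrow> 'a set" where
  "eps_crit \<epsilon> f = {x. global_slope f x \<le> ereal \<epsilon>}"

end

theory Submission
  imports Defs
begin

lemma BB:
  fixes R :: "'a::complete_space \<Rightarrow> 'a \<Rightarrow> bool" and F :: "'a \<Rightarrow> real"
  assumes refl: "\<And>x. R x x"
    and trans: "\<And>x y w. R x y \<Longrightarrow> R y w \<Longrightarrow> R x w"
    and cl: "\<And>x. closed {y. R x y}"
    and bdd: "bdd_below (range F)"
    and lampos: "lam > 0"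
    and dec: "\<And>x y. R x y \<Longrightarrow> lam * dist x y \<le> F x - F y"
  shows "\<exists>z. R x0 z \<and> (\<forall>y. R z y \<longrightarrow> y = z)"
proof -
  define m where "m x = Inf (F ` {y. R x y})" for x
  have mle: "m x \<le> F y" if "R x y" for x y
    unfolding m_def by (rule cInf_lower) (use that bdd in \<open>auto intro: bdd_below_mono\<close>)
  have ex: "\<exists>y. R x y \<and> F y < m x + e" if "e > 0" for x e
  proof -
    have "Inf (F ` {y. R x y}) < m x + e" using that m_def by simp
    moreover have "F ` {y. R x y} \<noteq> {}" using refl by auto
    ultimately show ?thesis by (subst (asm) cInf_less_iff) (use bdd in \<open>auto intro: bdd_below_mono\<close>)
  qed
  define nx where "nx x n = (SOME y. R x y \<and> F y < m x + (1/2)^n)" for x and n::nat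
  have nx: "R x (nx x n) \<and> F (nx x n) < m x + (1/2)^n" for x n
    unfolding nx_def by (rule someI_ex) (rule ex, simp)
  define xs where "xs = rec_nat x0 (\<lambda>n x. nx x n)"
  have xs0: "xs 0 = x0" and xsS: "xs (Suc n) = nx (xs n) n" for n by (simp_all add: xs_def)
  define S where "S n = {y. R (xs n) y}" for n
  have Smono: "S (Suc n) \<subseteq> S n" for n
    unfolding S_def xsS using nx trans by blast
  have diam: "dist y w \<le> 2 * (1/2)^n / lam" if "y \<in> S (Suc n)" "w \<in> S (Suc n)" for y w n
  proof -
    have "dist (xs (Suc n)) y \<le> (1/2)^n / lam" if "y \<in> S (Suc n)" for y
    proof -
      have "lam * dist (xs (Suc n)) y \<le> F (xs (Suc n)) - F y" using that dec S_def by auto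
      moreover have "y \<in> S n" using that Smono by auto
      hence "m (xs n) \<le> F y" using mle S_def by auto
      moreover have "F (xs (Suc n)) < m (xs n) + (1/2)^n" using nx xsS by auto
      ultimately have "lam * dist (xs (Suc n)) y \<le> (1/2)^n" by linarith
      thus ?thesis using lampos by (simp add: field_simps)
    qed
    from this[OF that(1)] this[OF that(2)] show ?thesis
      using dist_triangle3[of y w "xs (Suc n)"] by (simp add: dist_commute)
  qed
  have "\<exists>a. \<Inter>(range S) = {a}"
  proof (rule decreasing_closed_nest_sing)
    show "closed (S n)" for n using cl S_def by simp
    show "S n \<noteq> {}" for n using refl S_def by auto
    show "S n \<subseteq> S m" if "m \<le> n" for m n
      using lift_Suc_antimono_le[of S, OF Smono that] by simp
    show "\<exists>n. \<forall>x\<in>S n. \<forall>y\<in>S n. dist x y < e" if "e > 0" for e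
    proof -
      obtain n where n: "(1/2::real)^n < e * lam / 2"
      proof -
        have "e * lam / 2 > 0" using \<open>e > 0\<close> lampos by simp
        from real_arch_pow_inv[OF this, of "1/2"] show ?thesis using that by auto
      qed
      have "2 * (1/2)^n / lam < e" using n lampos by (simp add: field_simps)
      thus ?thesis using diam by (meson le_less_trans)
    qed
  qed
  then obtain a where a: "\<Inter>(range S) = {a}" by blast
  have "R x0 a" using a xs0 S_def by auto
  moreover have "y = a" if "R a y" for y
  proof -
    have "y \<in> S n" for n using a that trans S_def by blast
    thus ?thesis using a by auto
  qed
  ultimately show ?thesis by blast
qed

lemma slope_upper:
  assumes "y \<noteq> x"
  shows "ereal (max 0 (f x - f y) / dist x y) \<le> global_slope f x"
  unfolding global_slope_def by (rule Sup_upper) (use assms in auto)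

lemma slope_bounded:
  assumes "L-lipschitz_on UNIV f"
  shows "global_slope f x \<le> ereal (max 0 L)"
  unfolding global_slope_def
proof (rule Sup_least)
  fix v assume "v \<in> insert 0 {ereal (max 0 (f x - f y) / dist x y) |y. y \<noteq> x}"
  then consider "v = 0" | y where "y \<noteq> x" "v = ereal (max 0 (f x - f y) / dist x y)" by auto
  then show "v \<le> ereal (max 0 L)"
  proof cases
    case 1 then show ?thesis by (simp add: zero_ereal_def)
  next
    case 2
    have d: "dist x y > 0" using 2 by simp
    have "dist (f x) (f y) \<le> L * dist x y" using assms lipschitz_onD by fastforce
    hence "max 0 (f x - f y) \<le> max 0 L * dist x y"
      using d by (auto simp: dist_real_def abs_le_iff intro: order_trans[OF _ mult_right_mono])
    hence "max 0 (f x - f y) / dist x y \<le> max 0 L" using d by (simp add: divide_le_eq)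
    then show ?thesis using 2 ereal_less_eq(3) by metis
  qed
qed

lemma slope_gt:
  assumes "global_slope f x > ereal c" "c \<ge> 0"
  shows "\<exists>y. y \<noteq> x \<and> (f x - f y) > c * dist x y"
proof -
  from assms(1) obtain v where v: "v \<in> insert 0 {ereal (max 0 (f x - f y) / dist x y) |y. y \<noteq> x}" "ereal c < v"
    unfolding global_slope_def less_Sup_iff by blast
  then obtain y where y: "y \<noteq> x" "c < max 0 (f x - f y) / dist x y"
    using assms(2) by (auto simp: zero_ereal_def)
  have d: "dist x y > 0" using y by simp
  have "c * dist x y < max 0 (f x - f y)" using y d by (simp add: less_divide_eq)
  moreover have "0 \<le> c * dist x y" using assms(2) d by simp
  ultimately show ?thesis using y by (auto simp: max_def split: if_splits)
qed

lemma key: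
  fixes f g :: "'a::complete_space \<Rightarrow> real"
  assumes Lf: "L-lipschitz_on UNIV f" and Lg: "K-lipschitz_on UNIV g"
    and bdd: "bdd_below (range f)"
    and sl: "\<forall>x. global_slope f x \<ge> global_slope g x"
    and e: "\<epsilon> > 0" and t0: "0 < \<theta>" and t1: "\<theta> < 1"
  shows "\<exists>z\<in>eps_crit \<epsilon> f. \<theta> * (g x0 - g z) \<le> f x0 - f z"
proof -
  define R where "R x y = (\<theta> * (g x - g y) \<le> f x - f y \<and> \<theta> * \<epsilon> * dist x y \<le> f x - f y)" for x y
  have cf: "continuous_on UNIV f" using Lf by (rule lipschitz_on_continuous_on)
  have cg: "continuous_on UNIV g" using Lg by (rule lipschitz_on_continuous_on)
  have "\<exists>z. R x0 z \<and> (\<forall>y. R z y \<longrightarrow> y = z)"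
  proof (rule BB[where F=f and lam="\<theta> * \<epsilon>"])
    show "R x x" for x by (simp add: R_def)
    show "R x w" if "R x y" "R y w" for x y w
    proof -
      have "\<theta> * \<epsilon> * dist x w \<le> \<theta> * \<epsilon> * (dist x y + dist y w)"
        using dist_triangle[of x w y] t0 e by (intro mult_left_mono) auto
      thus ?thesis using that unfolding R_def by (simp add: right_diff_distrib distrib_left)
    qed
    show "closed {y. R x y}" for x
      unfolding R_def
      by (intro closed_Collect_conj closed_Collect_le continuous_intros cf cg)
    show "bdd_below (range f)" by fact
    show "0 < \<theta> * \<epsilon>" using t0 e by simp
    show "\<theta> * \<epsilon> * dist x y \<le> f x - f y" if "R x y" for x y using that R_def by simp
  qed
  then obtain z where z: "R x0 z" "\<And>y. R z y \<Longrightarrow> y = z" by blast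
  have "z \<in> eps_crit \<epsilon> f"
  proof (rule ccontr)
    assume "z \<notin> eps_crit \<epsilon> f"
    hence gt: "global_slope f z > ereal \<epsilon>" unfolding eps_crit_def by auto
    have hb: "global_slope f z \<le> ereal (max 0 L)" using Lf by (rule slope_bounded)
    have "global_slope f z \<noteq> \<infinity>"
    proof
      assume "global_slope f z = \<infinity>"
      with hb have "\<infinity> \<le> ereal (max 0 L)" by simp
      thus False by (simp only: ereal_infty_less_eq) (simp add: max_def split: if_splits)
    qed
    then obtain r where r: "global_slope f z = ereal r" using gt by (cases "global_slope f z") auto
    have re: "r > \<epsilon>" using gt r by simp
    have "global_slope f z > ereal (\<theta> * r)" using r re e t1 t0
      by (simp add: mult_less_cancel_right1[of r \<theta>, symmetric])
    then obtain y where y: "y \<noteq> z" "f z - f y > \<theta> * r * dist z y"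
      using slope_gt[of "\<theta> * r" f z] re e t0 by auto
    have d: "dist z y > 0" using y by simp
    have "ereal (max 0 (g z - g y) / dist z y) \<le> ereal r"
      using slope_upper[of y z g] sl r y by (metis order_trans)
    hence "max 0 (g z - g y) / dist z y \<le> r" by simp
    hence gz: "g z - g y \<le> r * dist z y" using d by (simp add: divide_le_eq)
    have "\<theta> * (g z - g y) \<le> \<theta> * r * dist z y" using gz t0 by (simp add: mult_left_mono)
    moreover have "\<theta> * \<epsilon> * dist z y \<le> \<theta> * r * dist z y" using re t0 d by simp
    ultimately have "R z y" using y unfolding R_def by linarith
    thus False using z y by auto
  qed
  thus ?thesis using z R_def by auto
qed

theorem proposition3p2:
  fixes f g :: "'a::complete_space \<Rightarrow> real"
  assumes "\<exists>L. L-lipschitz_on UNIV f"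
    and "\<exists>L. L-lipschitz_on UNIV g"
    and "bdd_below (range f)"
    and "\<forall>x. global_slope f x \<ge> global_slope g x"
    and "\<epsilon> > 0"
  shows "(INF x. ereal (f x - g x)) = (INF x\<in>eps_crit \<epsilon> f. ereal (f x - g x))"
proof (rule antisym)
  obtain L where L: "L-lipschitz_on UNIV f" using assms(1) by blast
  obtain K where K: "K-lipschitz_on UNIV g" using assms(2) by blast
  obtain B where B: "\<And>x. B \<le> f x" using assms(3) unfolding bdd_below_def by auto
  show "(INF x. ereal (f x - g x)) \<le> (INF x\<in>eps_crit \<epsilon> f. ereal (f x - g x))"
    by (rule INF_superset_mono) auto
  show "(INF x\<in>eps_crit \<epsilon> f. ereal (f x - g x)) \<le> (INF x. ereal (f x - g x))"
  proof (rule INF_greatest)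
    fix x0 :: 'a
    show "(INF x\<in>eps_crit \<epsilon> f. ereal (f x - g x)) \<le> ereal (f x0 - g x0)"
    proof (rule ereal_le_epsilon2)
      fix \<eta> :: real assume eta: "0 < \<eta>"
      define D where "D = f x0 - B"
      have D: "D \<ge> 0" using B D_def by simp
      define \<theta> where "\<theta> = (D + 1) / (D + 1 + \<eta>)"
      have t0: "0 < \<theta>" using D eta \<theta>_def by simp
      have t1: "\<theta> < 1" using D eta \<theta>_def by simp
      obtain z where z: "z \<in> eps_crit \<epsilon> f" "\<theta> * (g x0 - g z) \<le> f x0 - f z"
        using key[OF L K assms(3) assms(4) assms(5) t0 t1] by blast
      define a where "a = f x0 - f z"
      have aD: "a \<le> D + 1" using B[of z] a_def D_def by simp
      have "(D + 1) * (g x0 - g z) \<le> (D + 1 + \<eta>) * a"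
        using z(2) D eta unfolding \<theta>_def a_def by (simp add: field_simps)
      also have "\<dots> = (D + 1) * a + \<eta> * a" by (simp add: algebra_simps)
      also have "\<dots> \<le> (D + 1) * a + \<eta> * (D + 1)" using aD eta by simp
      finally have "(D + 1) * (g x0 - g z) \<le> (D + 1) * (a + \<eta>)" by (simp add: algebra_simps)
      hence "g x0 - g z \<le> a + \<eta>" using D by simp
      hence "f z - g z \<le> f x0 - g x0 + \<eta>" unfolding a_def by simp
      hence "ereal (f z - g z) \<le> ereal (f x0 - g x0) + ereal \<eta>" by simp
      moreover have "(INF x\<in>eps_crit \<epsilon> f. ereal (f x - g x)) \<le> ereal (f z - g z)"
        using z(1) by (rule INF_lower)
      ultimately show "(INF x\<in>eps_crit \<epsilon> f. ereal (f x - g x)) \<le> ereal (f x0 - g x0) + ereal \<eta>"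
        by (rule order_trans[rotated])
    qed
  qed
qed

end
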